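(* Let $f:\mathbb{R}^n\to\mathbb{R}^n$ be Borel measurable, $\mathbf{X}\subset\mathbb{R}^n$ compact, $\alpha\in(0,1)$, $\lambda$ a Borel probability measure on $\mathbf{X}$ with support $\mathbf{X}$, $\boldsymbol\beta=(\beta_1,\dots,\beta_N)^\top$ a vector of Lipschitz continuous functions on $\mathbb{R}^n$, $\{(x_i,x_i^+)\}_{i=1}^K$ data with $x_i\in\mathbf{X}$ and $x_i^+=f(x_i)$, and $\{z_i\}_{i=1}^{K'}\subset\mathbf{X}$ further points. Let $\mathbf{c}_{N,K}$ be an optimal solution of the linear program \[ \sup_{\mathbf{c}\in\mathbb{R}^N}\ \mathbf{z}^\top\mathbf{c}\quad\text{s.t.}\quad \boldsymbol\beta(x_i)^\top\mathbf{c}\le \mathrm{dist}_{\mathbf{X}}(x_i^+)+\alpha\,\boldsymbol\beta(\mathrm{proj}_{\mathbf{X}}(x_i^+))^\top\mathbf{c}\ \ (i=1,\dots,K),\qquad -1\le\boldsymbol\beta(z_i)^\top\mathbf{c}\le(1-\alpha)^{-1}\ \ (i=1,\dots,K'), \] where $\mathbf{z}=\int_{\mathbf{X}}\boldsymbol\beta(x)\,d\lambda(x)$, and let $v_{N,K}(x)=\boldsymbol\beta(x)^\top\mathbf{c}_{N,K}$. Define $E:\mathbf{X}\to\mathbb{R}$ by $E(x)=v_{N,K}(x)-\mathrm{dist}_{\mathbf{X}}(f(x))-\alpha\,v_{N,K}(\mathrm{proj}_{\mathbf{X}}(f(x)))$. Then \[ \big\{x\in\mathbf{X}: v_{N,K}(x)\le(1-\alpha)^{-1}\sup_{z\in\mathbf{X}}E(z)\big\}\supset\mathbf{X}_\infty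 . \]
   Context: The maximum positively invariant set is $\mathbf{X}_\infty=\{x\in\mathbf{X}: f^{(k)}(x)\in\mathbf{X}\text{ for all } k\in\mathbb{N}_0\}$, where $f^{(k)}$ is the $k$-fold composition of $f$. $\mathrm{proj}_{\mathbf{X}}(x)\in\operatorname{arg\,min}_{y\in\mathbf{X}}\|x-y\|_2$ is the Euclidean projection onto $\mathbf{X}$ (a fixed measurable selection when non-unique), and $\mathrm{dist}_{\mathbf{X}}(x)=\min\{\min_{y\in\mathbf{X}}\|x-y\|_2,1\}$. *)

theory Defs
  imports "HOL-Probability.Probability"
begin

definition distX :: "('a::metric_space) set \<Rightarrow> 'a \<Rightarrow> real" where
  "distX X x = min (infdist x X) 1"

definition is_proj_selection :: "('a::euclidean_space) set \<Rightarrow> ('a \<Rightarrow> 'a) \<Rightarrow> bool" where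
  "is_proj_selection X p \<longleftrightarrow>
     p \<in> borel_measurable borel \<and>
     (\<forall>x. p x \<in> X \<and> (\<forall>y\<in>X. norm (x - p x) \<le> norm (x - y)))"

definition max_pos_inv :: "('a \<Rightarrow> 'a) \<Rightarrow> 'a set \<Rightarrow> 'a set" where
  "max_pos_inv f X = {x \<in> X. \<forall>k::nat. (f ^^ k) x \<in> X}"

definition measure_support :: "('a::metric_space) measure \<Rightarrow> 'a set" where
  "measure_support M = {x. \<forall>e>0. emeasure M (ball x e) > 0}"

definition lp_feasible ::
  "('a::euclidean_space) set \<Rightarrow> ('a \<Rightarrow> 'b::real_inner) \<Rightarrow> real \<Rightarrow> ('a \<Rightarrow> 'a)
   \<Rightarrow> nat \<Rightarrow> (nat \<Rightarrow> 'a) \<Rightarrow> (nat \<Rightarrow> 'a) \<Rightarrow> nat \<Rightarrow> (nat \<Rightarrow> 'a) \<Rightarrow> 'b \<Rightarrow> bool" where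
  "lp_feasible X \<beta> \<alpha> p K xs xp K' zs c \<longleftrightarrow>
     (\<forall>i<K. \<beta> (xs i) \<bullet> c \<le> distX X (xp i) + \<alpha> * (\<beta> (p (xp i)) \<bullet> c)) \<and>
     (\<forall>i<K'. -1 \<le> \<beta> (zs i) \<bullet> c \<and> \<beta> (zs i) \<bullet> c \<le> 1 / (1 - \<alpha>))"

definition lp_optimal ::
  "'b \<Rightarrow> ('a::euclidean_space) set \<Rightarrow> ('a \<Rightarrow> 'b::real_inner) \<Rightarrow> real \<Rightarrow> ('a \<Rightarrow> 'a)
   \<Rightarrow> nat \<Rightarrow> (nat \<Rightarrow> 'a) \<Rightarrow> (nat \<Rightarrow> 'a) \<Rightarrow> nat \<Rightarrow> (nat \<Rightarrow> 'a) \<Rightarrow> 'b \<Rightarrow> bool" where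
  "lp_optimal zv X \<beta> \<alpha> p K xs xp K' zs c \<longleftrightarrow>
     lp_feasible X \<beta> \<alpha> p K xs xp K' zs c \<and>
     (\<forall>c'. lp_feasible X \<beta> \<alpha> p K xs xp K' zs c' \<longrightarrow> zv \<bullet> c' \<le> zv \<bullet> c)"

end

theory Submission
  imports Defs "HOL-Analysis.Analysis"
begin

theorem lemma4:
  fixes f :: "real^'n \<Rightarrow> real^'n"
    and X :: "(real^'n) set"
    and \<alpha> :: real
    and M :: "(real^'n) measure"
    and \<beta> :: "real^'n \<Rightarrow> real^'m"
    and p :: "real^'n \<Rightarrow> real^'n"
    and K K' :: nat
    and xs xp zs :: "nat \<Rightarrow> real^'n"
    and c :: "real^'m"
  assumes f_meas: "f \<in> borel_measurable borel"
    and X_compact: "compact X"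
    and \<alpha>: "0 < \<alpha>" "\<alpha> < 1"
    and M_prob: "prob_space M"
    and M_borel: "sets M = sets borel"
    and M_on_X: "emeasure M (UNIV - X) = 0"
    and M_supp: "measure_support M = X"
    and \<beta>_lip: "\<forall>j. \<exists>L. L-lipschitz_on UNIV (\<lambda>x. \<beta> x $ j)"
    and proj: "is_proj_selection X p"
    and data: "\<forall>i<K. xs i \<in> X \<and> xp i = f (xs i)"
    and zpts: "\<forall>i<K'. zs i \<in> X"
    and opt: "lp_optimal (integral\<^sup>L M \<beta>) X \<beta> \<alpha> p K xs xp K' zs c"
  shows "max_pos_inv f X \<subseteq>
           {x \<in> X. \<beta> x \<bullet> c \<le> (1 / (1 - \<alpha>)) *
              (SUP z\<in>X. \<beta> z \<bullet> c - distX X (f z) - \<alpha> * (\<beta> (p (f z)) \<bullet> c))}"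
proof
  fix x assume xI: "x \<in> max_pos_inv f X"
  define v where "v = (\<lambda>y. \<beta> y \<bullet> c)"
  define E where "E = (\<lambda>z. \<beta> z \<bullet> c - distX X (f z) - \<alpha> * (\<beta> (p (f z)) \<bullet> c))"
  define I where "I = max_pos_inv f X"
  have xX: "x \<in> X" using xI unfolding max_pos_inv_def by auto
  have pX: "\<And>y. p y \<in> X" using proj unfolding is_proj_selection_def by auto
  have pid: "\<And>y. y \<in> X \<Longrightarrow> p y = y"
  proof -
    fix y assume "y \<in> X"
    have "\<forall>z\<in>X. norm (y - p y) \<le> norm (y - z)" using proj unfolding is_proj_selection_def by blast
    then have "norm (y - p y) \<le> 0" using \<open>y \<in> X\<close> by force
    then show "p y = y" by simp
  qed
  have contv: "continuous_on UNIV v"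
  proof -
    have "v = (\<lambda>y. \<Sum>j\<in>UNIV. \<beta> y $ j * c $ j)" unfolding v_def inner_vec_def by simp
    moreover have "continuous_on UNIV (\<lambda>y. \<Sum>j\<in>UNIV. \<beta> y $ j * c $ j)"
    proof (rule continuous_on_sum, rule continuous_on_mult_right)
      fix j
      obtain L where "L-lipschitz_on UNIV (\<lambda>x. \<beta> x $ j)" using \<beta>_lip by blast
      then show "continuous_on UNIV (\<lambda>x. \<beta> x $ j)" by (rule lipschitz_on_continuous_on)
    qed
    ultimately show ?thesis by simp
  qed
  have "compact (v ` X)" using X_compact contv by (meson compact_continuous_image continuous_on_subset subset_UNIV)
  then have "bounded (v ` X)" by (rule compact_imp_bounded)
  then obtain B where B: "\<And>y. y \<in> X \<Longrightarrow> \<bar>v y\<bar> \<le> B" unfolding bounded_iff by fastforce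
  have distpos: "\<And>y. distX X y \<ge> 0" unfolding distX_def by (simp add: infdist_nonneg)
  have Eb: "\<And>z. z \<in> X \<Longrightarrow> E z \<le> B + \<alpha> * B"
  proof -
    fix z assume "z \<in> X"
    have "v z \<le> B" using B[OF \<open>z \<in> X\<close>] by simp
    moreover have "- v (p (f z)) \<le> B" using B[OF pX, of "f z"] by simp
    moreover have "\<alpha> * (- v (p (f z))) \<le> \<alpha> * B" using calculation(2) \<alpha> mult_left_mono[of "- v (p (f z))" B \<alpha>] by linarith
    ultimately show "E z \<le> B + \<alpha> * B" unfolding E_def v_def using distpos[of "f z"] \<alpha>
      by simp
  qed
  have bdd: "bdd_above (E ` X)" using Eb by (meson bdd_aboveI2)
  define S where "S = (SUP z\<in>X. E z)"
  have ES: "\<And>z. z \<in> X \<Longrightarrow> E z \<le> S" unfolding S_def using bdd by (simp add: cSUP_upper)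
  have Iclosed: "\<And>y. y \<in> I \<Longrightarrow> f y \<in> I \<and> y \<in> X"
  proof -
    fix y assume y: "y \<in> I"
    have "\<forall>k. (f ^^ k) (f y) \<in> X"
    proof
      fix k
      have "(f ^^ Suc k) y \<in> X" using y unfolding I_def max_pos_inv_def by blast
      then show "(f ^^ k) (f y) \<in> X" by (simp add: funpow_Suc_right del: funpow.simps)
    qed
    moreover have "f y \<in> X" using calculation by (metis funpow_0)
    ultimately show "f y \<in> I \<and> y \<in> X" using y unfolding I_def max_pos_inv_def by auto
  qed
  define w where "w = (\<lambda>y. v y - S / (1 - \<alpha>))"
  have step: "\<And>y. y \<in> I \<Longrightarrow> w y \<le> \<alpha> * w (f y)"
  proof -
    fix y assume y: "y \<in> I"
    then have yX: "y \<in> X" and fyX: "f y \<in> X" using Iclosed unfolding I_def by auto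
    have d0: "distX X (f y) = 0" unfolding distX_def using fyX by simp
    have "E y = v y - \<alpha> * v (f y)" unfolding E_def v_def using d0 pid[OF fyX] by simp
    then have "v y \<le> S + \<alpha> * v (f y)" using ES[OF yX] by simp
    moreover have "\<alpha> * (v (f y) - S / (1 - \<alpha>)) = \<alpha> * v (f y) - \<alpha> * S / (1 - \<alpha>)"
      by (simp add: right_diff_distrib)
    moreover have "S / (1 - \<alpha>) - \<alpha> * S / (1 - \<alpha>) = S"
    proof -
      have "S / (1 - \<alpha>) - \<alpha> * S / (1 - \<alpha>) = (S * (1 - \<alpha>)) / (1 - \<alpha>)"
        by (simp add: diff_divide_distrib algebra_simps)
      also have "\<dots> = S" using \<alpha> by simp
      finally show ?thesis .
    qed
    ultimately have "v y - S / (1 - \<alpha>) \<le> \<alpha> * (v (f y) - S / (1 - \<alpha>))"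
      by linarith
    then show "w y \<le> \<alpha> * w (f y)" unfolding w_def .
  qed
  define C where "C = B + \<bar>S\<bar> / (1 - \<alpha>)"
  have iter: "\<forall>y\<in>I. w y \<le> \<alpha> ^ k * C" for k
  proof (induction k)
    case 0
    show ?case
    proof
      fix y assume "y \<in> I"
      then have "y \<in> X" using Iclosed by blast
      then have "v y \<le> B" using B by fastforce
      moreover have "- S / (1 - \<alpha>) \<le> \<bar>S\<bar> / (1 - \<alpha>)" using \<alpha> divide_right_mono[of "- S" "\<bar>S\<bar>" "1 - \<alpha>"] by simp
      ultimately show "w y \<le> \<alpha> ^ 0 * C" unfolding w_def C_def by simp
    qed
  next
    case (Suc k)
    show ?case
    proof
      fix y assume y: "y \<in> I"
      have "w (f y) \<le> \<alpha> ^ k * C" using Suc Iclosed[OF y] by blast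
      then have "\<alpha> * w (f y) \<le> \<alpha> * (\<alpha> ^ k * C)" using \<alpha> by (simp add: mult_left_mono)
      then show "w y \<le> \<alpha> ^ Suc k * C" using step[OF y] by simp
    qed
  qed
  have "w x \<le> 0"
  proof (rule ccontr)
    assume "\<not> w x \<le> 0"
    then have wp: "w x > 0" by simp
    have Cp: "C + 1 > 0" unfolding C_def using B[OF xX] \<alpha> by (smt (verit) divide_nonneg_pos)
    obtain k where k: "\<alpha> ^ k < w x / (C + 1)" using real_arch_pow_inv[OF divide_pos_pos[OF wp Cp] \<alpha>(2)] by blast
    have "\<alpha> ^ k * C \<le> \<alpha> ^ k * (C + 1)" using \<alpha> by simp
    also have "\<dots> < w x" using k Cp by (simp add: pos_less_divide_eq)
    finally show False using iter[of k] xI unfolding I_def by fastforce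
  qed
  then have "v x \<le> S / (1 - \<alpha>)" unfolding w_def by simp
  then show "x \<in> {x \<in> X. \<beta> x \<bullet> c \<le> (1 / (1 - \<alpha>)) *
              (SUP z\<in>X. \<beta> z \<bullet> c - distX X (f z) - \<alpha> * (\<beta> (p (f z)) \<bullet> c))}"
    using xX unfolding v_def S_def E_def by simp
qed

end
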